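(* Let $1\le m\le N$ be integers and let $(u_n)$ be a sequence of finite (real-valued) functions on $\Lambda^m$. Then there exists a finite function $U:\Lambda^N\to\mathbb R$ such that $G_{N,m}u_n\to U$ $d^Nx$-a.e. on $\Lambda^N$ if and only if there exists a finite function $u:\Lambda^m\to\mathbb R$ such that $u_n\to u$ $d^mx$-a.e. on $\Lambda^m$.
   Context: $(\Lambda;dx)$ is a complete $\sigma$-finite measure space with non-zero measure $dx$; for $k\in\mathbb N$, $d^kx$ denotes the completion of the product measure $dx^{\otimes k}$ on $\Lambda^k$, and "a.e." on $\Lambda^k$ refers to $d^kx$. For integers $1\le m\le N$ and a function $u:\Lambda^m\to\mathbb R$ (not assumed symmetric or measurable), the generalized $N$-mean of order $m$ with kernel $u$ is $$(G_{N,m}u)(x_1,\dots,x_N)=\binom{N}{m}^{-1}\sum_{1\le i_1<\cdots<i_m\le N}u(x_{i_1},\dots,x_{i_m}).$$ *)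

theory Defs
  imports "HOL-Analysis.Analysis"
begin

text \<open>Points of Lambda^k are represented as elements of PiE {..<k} (space M),
  i.e. functions nat => 'a extensional on {..<k}.  The measure d^k x is the
  completion of the k-fold product measure.\<close>

definition prod_compl :: "nat \<Rightarrow> 'a measure \<Rightarrow> (nat \<Rightarrow> 'a) measure" where
  "prod_compl k M = completion (PiM {..<k} (\<lambda>_. M))"

definition sub_tuple :: "nat set \<Rightarrow> (nat \<Rightarrow> 'a) \<Rightarrow> (nat \<Rightarrow> 'a)" where
  "sub_tuple S x = (\<lambda>j. if j < card S then x (sorted_list_of_set S ! j) else undefined)"

definition gen_mean :: "nat \<Rightarrow> nat \<Rightarrow> ((nat \<Rightarrow> 'a) \<Rightarrow> real) \<Rightarrow> (nat \<Rightarrow> 'a) \<Rightarrow> real" where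
  "gen_mean N m u x =
     (\<Sum>S \<in> {S. S \<subseteq> {..<N} \<and> card S = m}. u (sub_tuple S x)) / real (N choose m)"

end

theory Submission
  imports Defs
begin



lemma AE_iso:
  assumes T: "T \<in> measurable A B" and S: "S \<in> measurable B A"
    and ST: "\<And>a. a \<in> space A \<Longrightarrow> S (T a) = a"
    and TS: "\<And>b. b \<in> space B \<Longrightarrow> T (S b) = b"
    and D: "distr A B T = B"
  shows "(AE a in A. Q (T a)) \<longleftrightarrow> (AE b in B. Q b)"
proof
  assume "AE a in A. Q (T a)"
  then obtain N where N: "N \<in> null_sets A" "{a \<in> space A. \<not> Q (T a)} \<subseteq> N"
    unfolding eventually_ae_filter by blast
  let ?NB = "S -` N \<inter> space B"
  have sNB: "?NB \<in> sets B" using S N(1) by (auto intro: measurable_sets)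
  have "emeasure B ?NB = emeasure (distr A B T) ?NB" using D by simp
  also have "\<dots> = emeasure A (T -` ?NB \<inter> space A)"
    using sNB T by (simp add: emeasure_distr)
  also have "T -` ?NB \<inter> space A = N \<inter> space A"
    using ST T by (auto simp: measurable_def)
  also have "emeasure A (N \<inter> space A) = 0"
    using N(1) by (simp add: Int_absorb2 null_setsD1 null_setsD2 sets.sets_into_space)
  finally have "?NB \<in> null_sets B" using sNB by auto
  moreover have "{b \<in> space B. \<not> Q b} \<subseteq> ?NB"
  proof
    fix b assume b: "b \<in> {b \<in> space B. \<not> Q b}"
    then have "S b \<in> space A" using S by (auto simp: measurable_def)
    moreover have "\<not> Q (T (S b))" using b TS by auto
    ultimately show "b \<in> ?NB" using N(2) b by auto
  qed
  ultimately show "AE b in B. Q b" unfolding eventually_ae_filter by blast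
next
  assume "AE b in B. Q b"
  then obtain N where N: "N \<in> null_sets B" "{b \<in> space B. \<not> Q b} \<subseteq> N"
    unfolding eventually_ae_filter by blast
  let ?NA = "T -` N \<inter> space A"
  have sNA: "?NA \<in> sets A" using T N(1) by (auto intro: measurable_sets)
  have "emeasure A ?NA = emeasure (distr A B T) N"
    using emeasure_distr[OF T null_setsD2[OF N(1)]] by simp
  also have "\<dots> = 0" using D N(1) by (auto dest: null_setsD1)
  finally have "?NA \<in> null_sets A" using sNA by auto
  moreover have "{a \<in> space A. \<not> Q (T a)} \<subseteq> ?NA"
    using N(2) T by (auto simp: measurable_def)
  ultimately show "AE a in A. Q (T a)" unfolding eventually_ae_filter by blast
qed

lemma AE_const_nonzero:
  assumes "AE x in A. P" "emeasure A (space A) \<noteq> 0"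
  shows P
proof (rule ccontr)
  assume "\<not> P"
  then obtain N where N: "N \<in> null_sets A" "space A \<subseteq> N"
    using assms(1) unfolding eventually_ae_filter by auto
  then have "emeasure A (space A) \<le> emeasure A N"
    by (intro emeasure_mono) auto
  then show False using N assms(2) by auto
qed

lemma reindex_distr:
  assumes sf: "sigma_finite_measure M" and f: "bij_betw f I J" and fin: "finite I"
  shows "distr (PiM J (\<lambda>_. M)) (PiM I (\<lambda>_. M)) (\<lambda>\<omega>. \<lambda>n\<in>I. \<omega> (f n)) = PiM I (\<lambda>_. M)"
proof -
  interpret product_sigma_finite "\<lambda>_. M" using sf by (simp add: product_sigma_finite_def)
  have finJ: "finite J" using f fin bij_betw_finite by blast
  have meas: "(\<lambda>\<omega>. \<lambda>n\<in>I. \<omega> (f n)) \<in> measurable (PiM J (\<lambda>_. M)) (PiM I (\<lambda>_. M))"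
    using f by (auto intro!: measurable_restrict measurable_component_singleton simp: bij_betw_def)
  show ?thesis
  proof (rule PiM_eqI[OF fin])
    show "sets (distr (PiM J (\<lambda>_. M)) (PiM I (\<lambda>_. M)) (\<lambda>\<omega>. \<lambda>n\<in>I. \<omega> (f n))) = sets (PiM I (\<lambda>_. M))"
      by simp
    fix A assume A: "\<And>i. i \<in> I \<Longrightarrow> A i \<in> sets M"
    let ?g = "the_inv_into I f"
    have pre: "(\<lambda>\<omega>. \<lambda>n\<in>I. \<omega> (f n)) -` Pi\<^sub>E I A \<inter> space (PiM J (\<lambda>_. M)) = Pi\<^sub>E J (\<lambda>j. A (?g j))"
    proof (intro set_eqI iffI)
      fix \<omega> assume "\<omega> \<in> (\<lambda>\<omega>. \<lambda>n\<in>I. \<omega> (f n)) -` Pi\<^sub>E I A \<inter> space (PiM J (\<lambda>_. M))"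
      then have w1: "\<omega> \<in> space (PiM J (\<lambda>_. M))" and w2: "\<And>i. i \<in> I \<Longrightarrow> \<omega> (f i) \<in> A i"
        by (auto simp: PiE_iff)
      show "\<omega> \<in> Pi\<^sub>E J (\<lambda>j. A (?g j))"
      proof (rule PiE_I)
        fix j assume j: "j \<in> J"
        have gj: "?g j \<in> I" "f (?g j) = j"
          using f j by (auto simp: bij_betw_def the_inv_into_into f_the_inv_into_f)
        show "\<omega> j \<in> A (?g j)" using w2[OF gj(1)] gj(2) by simp
      next
        fix j assume "j \<notin> J" then show "\<omega> j = undefined" using w1 by (auto simp: space_PiM PiE_iff extensional_def)
      qed
    next
      fix \<omega> assume w: "\<omega> \<in> Pi\<^sub>E J (\<lambda>j. A (?g j))"
      have "\<omega> \<in> space (PiM J (\<lambda>_. M))"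
        unfolding space_PiM
      proof (rule PiE_I)
        fix j assume j: "j \<in> J"
        have gj: "?g j \<in> I" using f j by (auto simp: bij_betw_def the_inv_into_into)
        show "\<omega> j \<in> space M" using w j sets.sets_into_space[OF A[OF gj]] by (auto simp: PiE_iff)
      next
        fix j assume "j \<notin> J" then show "\<omega> j = undefined" using w by (auto simp: PiE_iff extensional_def)
      qed
      moreover have "(\<lambda>n\<in>I. \<omega> (f n)) \<in> Pi\<^sub>E I A"
        using w f by (auto simp: PiE_iff bij_betw_def the_inv_into_f_f)
      ultimately show "\<omega> \<in> (\<lambda>\<omega>. \<lambda>n\<in>I. \<omega> (f n)) -` Pi\<^sub>E I A \<inter> space (PiM J (\<lambda>_. M))" by auto
    qed
    have AJ: "\<And>j. j \<in> J \<Longrightarrow> A (?g j) \<in> sets M"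
      using A f by (simp add: bij_betw_def the_inv_into_into)
    have "emeasure (distr (PiM J (\<lambda>_. M)) (PiM I (\<lambda>_. M)) (\<lambda>\<omega>. \<lambda>n\<in>I. \<omega> (f n))) (Pi\<^sub>E I A)
        = emeasure (PiM J (\<lambda>_. M)) (Pi\<^sub>E J (\<lambda>j. A (?g j)))"
      using meas A by (simp add: emeasure_distr sets_PiM_I_finite fin pre)
    also have "\<dots> = (\<Prod>j\<in>J. emeasure M (A (?g j)))"
      using AJ finJ by (simp add: emeasure_PiM)
    also have "\<dots> = (\<Prod>i\<in>I. emeasure M (A i))"
      using f by (subst prod.reindex_bij_betw[symmetric, OF f])
         (auto intro!: prod.cong simp: bij_betw_def the_inv_into_f_f)
    finally show "emeasure (distr (PiM J (\<lambda>_. M)) (PiM I (\<lambda>_. M)) (\<lambda>\<omega>. \<lambda>n\<in>I. \<omega> (f n))) (Pi\<^sub>E I A) = (\<Prod>i\<in>I. emeasure M (A i))" .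
  qed
qed




lemma PiM_space_nonzero:
  assumes sf: "sigma_finite_measure M" and nz: "emeasure M (space M) \<noteq> 0" and fin: "finite J"
  shows "emeasure (PiM J (\<lambda>_. M)) (space (PiM J (\<lambda>_. M))) \<noteq> 0"
proof -
  interpret product_sigma_finite "\<lambda>_. M" using sf by (simp add: product_sigma_finite_def)
  have "emeasure (PiM J (\<lambda>_. M)) (Pi\<^sub>E J (\<lambda>_. space M)) = (\<Prod>i\<in>J. emeasure M (space M))"
    using fin by (simp add: emeasure_PiM)
  then show ?thesis using nz fin by (simp add: space_PiM ennreal_prod_eq_0)
qed

lemma AE_pair_fst:
  assumes "sigma_finite_measure M1" "sigma_finite_measure M2"
    and nz: "emeasure M2 (space M2) \<noteq> 0"
  shows "(AE p in M1 \<Otimes>\<^sub>M M2. Q (fst p)) \<longleftrightarrow> (AE a in M1. Q a)"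
proof -
  interpret pair_sigma_finite M1 M2 using assms by (simp add: pair_sigma_finite_def)
  show ?thesis
  proof
    assume "AE p in M1 \<Otimes>\<^sub>M M2. Q (fst p)"
    then have "AE a in M1. AE b in M2. Q a" using AE_pair[of "\<lambda>p. Q (fst p)"] by simp
    then show "AE a in M1. Q a"
      by (rule eventually_mono) (use AE_const_nonzero nz in blast)
  next
    assume "AE a in M1. Q a"
    then obtain N where N: "N \<in> null_sets M1" "{a \<in> space M1. \<not> Q a} \<subseteq> N"
      unfolding eventually_ae_filter by blast
    have "N \<times> space M2 \<in> null_sets (M1 \<Otimes>\<^sub>M M2)"
      using N(1) by (intro M2.times_in_null_sets1) auto
    moreover have "{p \<in> space (M1 \<Otimes>\<^sub>M M2). \<not> Q (fst p)} \<subseteq> N \<times> space M2"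
      using N(2) by (auto simp: space_pair_measure)
    ultimately show "AE p in M1 \<Otimes>\<^sub>M M2. Q (fst p)" unfolding eventually_ae_filter by blast
  qed
qed

lemma AE_restrict_union:
  assumes sf: "sigma_finite_measure M" and nz: "emeasure M (space M) \<noteq> 0"
    and fin: "finite I" "finite J" and dis: "I \<inter> J = {}"
  shows "(AE x in PiM (I \<union> J) (\<lambda>_. M). Q (restrict x I)) \<longleftrightarrow> (AE a in PiM I (\<lambda>_. M). Q a)"
proof -
  interpret product_sigma_finite "\<lambda>_. M" using sf by (simp add: product_sigma_finite_def)
  interpret I: finite_product_sigma_finite "\<lambda>_. M" I by standard fact
  interpret J: finite_product_sigma_finite "\<lambda>_. M" J by standard fact
  have "(AE p in PiM I (\<lambda>_. M) \<Otimes>\<^sub>M PiM J (\<lambda>_. M). Q (restrict (merge I J p) I))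
      \<longleftrightarrow> (AE x in PiM (I \<union> J) (\<lambda>_. M). Q (restrict x I))"
  proof (rule AE_iso[where S="\<lambda>x. (restrict x I, restrict x J)"])
    show "merge I J \<in> measurable (PiM I (\<lambda>_. M) \<Otimes>\<^sub>M PiM J (\<lambda>_. M)) (PiM (I \<union> J) (\<lambda>_. M))"
      by (rule measurable_merge)
    show "(\<lambda>x. (restrict x I, restrict x J)) \<in> measurable (PiM (I \<union> J) (\<lambda>_. M)) (PiM I (\<lambda>_. M) \<Otimes>\<^sub>M PiM J (\<lambda>_. M))"
      by (intro measurable_Pair measurable_restrict_subset) auto
    show "(restrict (merge I J a) I, restrict (merge I J a) J) = a"
      if "a \<in> space (PiM I (\<lambda>_. M) \<Otimes>\<^sub>M PiM J (\<lambda>_. M))" for a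
      using that dis by (cases a) (auto simp: space_pair_measure space_PiM restrict_merge PiE_iff
          intro!: restrict_ext extensional_restrict)
    show "merge I J (restrict b I, restrict b J) = b" if "b \<in> space (PiM (I \<union> J) (\<lambda>_. M))" for b
      using that by (auto simp: space_PiM)
    show "distr (PiM I (\<lambda>_. M) \<Otimes>\<^sub>M PiM J (\<lambda>_. M)) (PiM (I \<union> J) (\<lambda>_. M)) (merge I J) = PiM (I \<union> J) (\<lambda>_. M)"
      using distr_merge[OF dis fin] .
  qed
  moreover have "(AE p in PiM I (\<lambda>_. M) \<Otimes>\<^sub>M PiM J (\<lambda>_. M). Q (restrict (merge I J p) I))
      \<longleftrightarrow> (AE p in PiM I (\<lambda>_. M) \<Otimes>\<^sub>M PiM J (\<lambda>_. M). Q (fst p))"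
  proof (rule AE_cong)
    fix p assume "p \<in> space (PiM I (\<lambda>_. M) \<Otimes>\<^sub>M PiM J (\<lambda>_. M))"
    then have "restrict (merge I J p) I = fst p"
      using dis by (cases p) (auto simp: space_pair_measure space_PiM restrict_merge PiE_iff)
    then show "Q (restrict (merge I J p) I) \<longleftrightarrow> Q (fst p)" by simp
  qed
  moreover have "(AE p in PiM I (\<lambda>_. M) \<Otimes>\<^sub>M PiM J (\<lambda>_. M). Q (fst p)) \<longleftrightarrow> (AE a in PiM I (\<lambda>_. M). Q a)"
    by (rule AE_pair_fst[OF I.sigma_finite_measure_axioms J.sigma_finite_measure_axioms PiM_space_nonzero[OF sf nz fin(2)]])
  ultimately show ?thesis by simp
qed




lemma AE_reindex:
  fixes \<sigma> :: "nat \<Rightarrow> nat" and k K :: nat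
  assumes sf: "sigma_finite_measure M" and nz: "emeasure M (space M) \<noteq> 0"
    and inj: "inj_on \<sigma> {..<k}" and rng: "\<sigma> ` {..<k} \<subseteq> {..<K}"
  shows "(AE x in PiM {..<K} (\<lambda>_. M). Q (\<lambda>i\<in>{..<k}. x (\<sigma> i))) \<longleftrightarrow> (AE y in PiM {..<k} (\<lambda>_. M). Q y)"
proof -
  define J where "J = \<sigma> ` {..<k}"
  have UK: "{..<K} = J \<union> ({..<K} - J)" using rng J_def by auto
  have finJ: "finite J" unfolding J_def by (rule finite_imageI) simp
  have bij: "bij_betw \<sigma> {..<k} J" using inj J_def by (simp add: bij_betw_def)
  have eq1: "\<And>x. (\<lambda>i\<in>{..<k}. restrict x J (\<sigma> i)) = (\<lambda>i\<in>{..<k}. x (\<sigma> i))"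
    using J_def by (auto intro!: restrict_ext)
  have "(AE x in PiM {..<K} (\<lambda>_. M). Q (\<lambda>i\<in>{..<k}. x (\<sigma> i)))
      \<longleftrightarrow> (AE x in PiM (J \<union> ({..<K} - J)) (\<lambda>_. M). (\<lambda>a. Q (\<lambda>i\<in>{..<k}. a (\<sigma> i))) (restrict x J))"
    by (subst UK[symmetric]) (simp only: eq1)
  also have "\<dots> \<longleftrightarrow> (AE a in PiM J (\<lambda>_. M). Q (\<lambda>i\<in>{..<k}. a (\<sigma> i)))"
    by (rule AE_restrict_union[OF sf nz finJ]) auto
  also have "\<dots> \<longleftrightarrow> (AE y in PiM {..<k} (\<lambda>_. M). Q y)"
  proof (rule AE_iso[where S="\<lambda>y. \<lambda>j\<in>J. y (the_inv_into {..<k} \<sigma> j)"])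
    show "(\<lambda>a. \<lambda>i\<in>{..<k}. a (\<sigma> i)) \<in> measurable (PiM J (\<lambda>_. M)) (PiM {..<k} (\<lambda>_. M))"
      using J_def by (auto intro!: measurable_restrict measurable_component_singleton)
    show "(\<lambda>y. \<lambda>j\<in>J. y (the_inv_into {..<k} \<sigma> j)) \<in> measurable (PiM {..<k} (\<lambda>_. M)) (PiM J (\<lambda>_. M))"
      using bij by (auto intro!: measurable_restrict measurable_component_singleton
          simp: bij_betw_def the_inv_into_f_f)
    show "(\<lambda>j\<in>J. (\<lambda>i\<in>{..<k}. a (\<sigma> i)) (the_inv_into {..<k} \<sigma> j)) = a"
      if "a \<in> space (PiM J (\<lambda>_. M))" for a
    proof (rule ext)
      fix j show "(\<lambda>j\<in>J. (\<lambda>i\<in>{..<k}. a (\<sigma> i)) (the_inv_into {..<k} \<sigma> j)) j = a j"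
        using that bij by (cases "j \<in> J")
          (auto simp: bij_betw_def the_inv_into_into f_the_inv_into_f the_inv_into_f_f space_PiM PiE_iff extensional_def)
    qed
    show "(\<lambda>i\<in>{..<k}. (\<lambda>j\<in>J. b (the_inv_into {..<k} \<sigma> j)) (\<sigma> i)) = b"
      if "b \<in> space (PiM {..<k} (\<lambda>_. M))" for b
    proof (rule ext)
      fix i show "(\<lambda>i\<in>{..<k}. (\<lambda>j\<in>J. b (the_inv_into {..<k} \<sigma> j)) (\<sigma> i)) i = b i"
        using that bij J_def by (cases "i < k")
          (auto simp: bij_betw_def the_inv_into_f_f space_PiM PiE_iff extensional_def)
    qed
    show "distr (PiM J (\<lambda>_. M)) (PiM {..<k} (\<lambda>_. M)) (\<lambda>a. \<lambda>i\<in>{..<k}. a (\<sigma> i)) = PiM {..<k} (\<lambda>_. M)"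
      by (rule reindex_distr[OF sf bij]) simp
  qed
  finally show ?thesis .
qed




locale gm = fixes M :: "'a measure"
  assumes sf: "sigma_finite_measure M" and nz: "emeasure M (space M) \<noteq> 0"
begin

definition ok :: "nat \<Rightarrow> (nat \<Rightarrow> (nat \<Rightarrow> 'a) \<Rightarrow> real) \<Rightarrow> bool" where
  "ok K f \<longleftrightarrow> (AE x in PiM {..<K} (\<lambda>_. M). convergent (\<lambda>n. f n x))"

lemma ok_reindex:
  fixes \<sigma> :: "nat \<Rightarrow> nat" and k K :: nat
  assumes "inj_on \<sigma> {..<k}" "\<sigma> ` {..<k} \<subseteq> {..<K}"
  shows "ok K (\<lambda>n x. f n (\<lambda>i\<in>{..<k}. x (\<sigma> i))) \<longleftrightarrow> ok k f"
  unfolding ok_def using AE_reindex[OF sf nz assms, of "\<lambda>y. convergent (\<lambda>n. f n y)"] by simp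

lemma ok_cong:
  assumes "\<And>n x. x \<in> space (PiM {..<K} (\<lambda>_. M)) \<Longrightarrow> f n x = g n x"
  shows "ok K f \<longleftrightarrow> ok K g"
  unfolding ok_def by (rule AE_cong) (simp add: assms)

lemma ok_add:
  assumes "ok K f" "ok K g" shows "ok K (\<lambda>n x. f n x + g n x)"
  using assms unfolding ok_def by eventually_elim (rule convergent_add)

lemma ok_diff:
  assumes "ok K f" "ok K g" shows "ok K (\<lambda>n x. f n x - g n x)"
  using assms unfolding ok_def by eventually_elim (rule convergent_diff)

lemma ok_scale:
  assumes "ok K f" shows "ok K (\<lambda>n x. c * f n x)"
  using assms unfolding ok_def by eventually_elim (intro convergent_mult convergent_const)

lemma ok_const: "ok K (\<lambda>n x. 0)"
  unfolding ok_def by (simp add: convergent_const)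

lemma ok_sum:
  assumes "finite A" "\<And>a. a \<in> A \<Longrightarrow> ok K (f a)"
  shows "ok K (\<lambda>n x. \<Sum>a\<in>A. f a n x)"
  using assms by (induction A rule: finite_induct) (auto intro: ok_add ok_const)

end

definition sl :: "nat set \<Rightarrow> nat list" where "sl S = sorted_list_of_set S"
definition ix :: "nat \<Rightarrow> nat \<Rightarrow> nat set \<Rightarrow> nat \<Rightarrow> nat" where
  "ix N m S j = (if j < m then sl S ! j else N + (j - m))"
definition tup :: "nat \<Rightarrow> nat \<Rightarrow> nat \<Rightarrow> nat set \<Rightarrow> (nat \<Rightarrow> 'a) \<Rightarrow> (nat \<Rightarrow> 'a)" where
  "tup N m r S x = (\<lambda>j\<in>{..<m+r}. x (ix N m S j))"
definition subs :: "nat \<Rightarrow> nat \<Rightarrow> nat set set" where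
  "subs N m = {S. S \<subseteq> {..<N} \<and> card S = m}"
definition Wm :: "nat \<Rightarrow> nat \<Rightarrow> nat \<Rightarrow> (nat set \<Rightarrow> real) \<Rightarrow> (nat \<Rightarrow> (nat \<Rightarrow> 'a) \<Rightarrow> real) \<Rightarrow> nat \<Rightarrow> (nat \<Rightarrow> 'a) \<Rightarrow> real" where
  "Wm N m r c u n x = (\<Sum>S\<in>subs N m. c S * u n (tup N m r S x))"

lemma finite_subs: "finite (subs N m)"
  unfolding subs_def by (rule finite_subset[of _ "Pow {..<N}"]) auto

lemma subs_props:
  assumes "S \<in> subs N m"
  shows "finite S" "length (sl S) = m" "set (sl S) = S" "distinct (sl S)" "sorted (sl S)" "S \<subseteq> {..<N}" "card S = m"
  using assms finite_subset[of S "{..<N}"] unfolding subs_def sl_def by auto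

lemma sl_nth_in: assumes "S \<in> subs N m" "j < m" shows "sl S ! j \<in> S" "sl S ! j < N"
  using subs_props[OF assms(1)] assms(2) nth_mem[of j "sl S"] by auto

lemma sl_insert_max:
  assumes "finite S'" "\<And>s. s \<in> S' \<Longrightarrow> s < p"
  shows "sl (insert p S') = sl S' @ [p]"
proof -
  have "sorted (sl S' @ [p])" using assms
    by (auto simp: sl_def sorted_append less_imp_le)
  moreover have "distinct (sl S' @ [p])" using assms by (auto simp: sl_def)
  moreover have "set (sl S' @ [p]) = insert p S'" using assms by (auto simp: sl_def)
  ultimately show ?thesis
    by (metis sl_def sorted_list_of_set.idem_if_sorted_distinct)
qed

lemma sl_Max:
  assumes "finite S" "S \<noteq> {}"
  shows "sl S = sl (S - {Max S}) @ [Max S]"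
proof -
  have "insert (Max S) (S - {Max S}) = S" using Max_in[OF assms] by (rule insert_Diff)
  moreover have "\<And>s. s \<in> S - {Max S} \<Longrightarrow> s < Max S" using assms
    by (metis DiffE Max_ge insertI1 le_neq_implies_less)
  ultimately show ?thesis using sl_insert_max[of "S - {Max S}" "Max S"] assms by simp
qed

lemma ix_inj:
  assumes "S \<in> subs N m"
  shows "inj_on (ix N m S) {..<m+r}" "ix N m S ` {..<m+r} \<subseteq> {..<N+r}"
proof -
  show "inj_on (ix N m S) {..<m+r}"
  proof (rule inj_onI)
    fix i j assume ij: "i \<in> {..<m+r}" "j \<in> {..<m+r}" "ix N m S i = ix N m S j"
    show "i = j"
    proof (cases "i < m"; cases "j < m")
      assume "i < m" "j < m"
      then show ?thesis using ij subs_props[OF assms] by (auto simp: ix_def nth_eq_iff_index_eq)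
    next
      assume "i < m" "\<not> j < m"
      then show ?thesis using ij sl_nth_in[OF assms, of i] by (auto simp: ix_def)
    next
      assume "\<not> i < m" "j < m"
      then show ?thesis using ij sl_nth_in[OF assms, of j] by (auto simp: ix_def)
    next
      assume "\<not> i < m" "\<not> j < m"
      then show ?thesis using ij by (auto simp: ix_def)
    qed
  qed
  show "ix N m S ` {..<m+r} \<subseteq> {..<N+r}"
  proof
    fix y assume "y \<in> ix N m S ` {..<m+r}"
    then obtain j where j: "j < m + r" "y = ix N m S j" by auto
    show "y \<in> {..<N+r}"
    proof (cases "j < m")
      case True then show ?thesis using sl_nth_in(2)[OF assms True] j by (simp add: ix_def)
    next
      case False then show ?thesis using j by (simp add: ix_def)
    qed
  qed
qed

lemma subs_Max: assumes "S \<in> subs N (Suc m)" shows "S - {Max S} \<in> subs N m" "S \<noteq> {}" "Max S \<in> S"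
proof -
  have S: "S \<subseteq> {..<N}" "card S = Suc m" using assms by (auto simp: subs_def)
  have fin: "finite S" using S(1) finite_subset by blast
  show ne: "S \<noteq> {}" using S by auto
  show mx: "Max S \<in> S" using fin ne by (rule Max_in)
  show "S - {Max S} \<in> subs N m" using S fin mx by (auto simp: subs_def card_Diff_singleton)
qed




definition al :: "nat \<Rightarrow> nat \<Rightarrow> nat" where "al m j = (if j < m then j else Suc j)"
definition be :: "nat \<Rightarrow> nat \<Rightarrow> nat" where "be m' j = (if j < m' then j else if j = m' then Suc m' else Suc j)"
definition vk :: "nat \<Rightarrow> nat \<Rightarrow> (nat \<Rightarrow> (nat \<Rightarrow> 'a) \<Rightarrow> real) \<Rightarrow> nat \<Rightarrow> (nat \<Rightarrow> 'a) \<Rightarrow> real" where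
  "vk m' r u n w = u n (\<lambda>j\<in>{..<Suc m'+r}. w (al (Suc m') j)) - u n (\<lambda>j\<in>{..<Suc m'+r}. w (be m' j))"

lemma tup_theta:
  assumes S: "S \<in> subs N (Suc m')"
  shows "tup N (Suc m') r S (\<lambda>i\<in>{..<N+r}. x (if i < N then i else Suc i))
       = (\<lambda>j\<in>{..<Suc m'+r}. tup N (Suc m') (Suc r) S x (al (Suc m') j))"
proof (rule ext)
  fix j
  show "tup N (Suc m') r S (\<lambda>i\<in>{..<N+r}. x (if i < N then i else Suc i)) j = (\<lambda>j\<in>{..<Suc m'+r}. tup N (Suc m') (Suc r) S x (al (Suc m') j)) j"
  proof (cases "j < Suc m'")
    case True
    then show ?thesis using sl_nth_in[OF S True] by (simp add: ix_def tup_def al_def)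
  next
    case False
    then have a: "al (Suc m') j = Suc j" by (simp add: al_def)
    have i1: "ix N (Suc m') S j = N + (j - Suc m')" using False by (simp add: ix_def)
    have i2: "ix N (Suc m') S (Suc j) = Suc (N + (j - Suc m'))" using False by (simp add: ix_def)
    show ?thesis
    proof (cases "j < Suc m' + r")
      case True
      then show ?thesis unfolding tup_def using i1 i2 a False by (simp; (intro conjI impI; linarith))
    next
      case F2: False
      then show ?thesis unfolding tup_def using a False by simp
    qed
  qed
qed

lemma tup_Max:
  assumes S: "S \<in> subs N (Suc m')"
  shows "tup N m' (Suc r) (S - {Max S}) x
       = (\<lambda>j\<in>{..<Suc m'+r}. tup N (Suc m') (Suc r) S x (be m' j))"
proof -
  have fin: "finite S" using subs_props(1)[OF S] .
  have sl: "sl S = sl (S - {Max S}) @ [Max S]" using sl_Max[OF fin subs_Max(2)[OF S]] .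
  have len: "length (sl (S - {Max S})) = m'" using subs_props(2)[OF subs_Max(1)[OF S]] .
  show ?thesis unfolding tup_def
  proof (rule ext)
    fix j
    show "(\<lambda>j\<in>{..<m' + Suc r}. x (ix N m' (S - {Max S}) j)) j = (\<lambda>j\<in>{..<Suc m'+r}. (\<lambda>j\<in>{..<Suc m' + Suc r}. x (ix N (Suc m') S j)) (be m' j)) j"
      using sl len by (auto simp: ix_def be_def nth_append)
  qed
qed

context gm begin

lemma part2:
  assumes IH: "\<And>N r c u. (\<forall>S. 0 \<le> c S) \<Longrightarrow> (\<exists>S\<in>subs N m'. 0 < c S) \<Longrightarrow> ok (N+r) (Wm N m' r c u) \<Longrightarrow> ok (m'+r) u"
    and c0: "\<forall>S. 0 \<le> c S" and S0: "S0 \<in> subs N (Suc m')" "0 < c S0"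
    and hW: "ok (N+r) (Wm N (Suc m') r c u)"
    and hv: "ok (Suc m' + Suc r) (vk m' r u)"
  shows "ok (Suc m' + r) u"
proof -
  let ?m = "Suc m'"
  define \<theta> where "\<theta> i = (if i < N then i else Suc i)" for i
  have g1: "ok (N + Suc r) (\<lambda>n x. Wm N ?m r c u n (\<lambda>i\<in>{..<N+r}. x (\<theta> i)))"
    by (rule ok_reindex[THEN iffD2, OF _ _ hW]) (auto simp: \<theta>_def inj_on_def)
  have D: "ok (N + Suc r) (\<lambda>n x. vk m' r u n (tup N ?m (Suc r) S x))" if S: "S \<in> subs N ?m" for S
    unfolding tup_def by (rule ok_reindex[THEN iffD2, OF ix_inj[OF S] hv])
  have Deq: "vk m' r u n (tup N ?m (Suc r) S x) = u n (tup N ?m r S (\<lambda>i\<in>{..<N+r}. x (\<theta> i))) - u n (tup N m' (Suc r) (S - {Max S}) x)"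
    if S: "S \<in> subs N ?m" for S n x
    unfolding vk_def tup_theta[OF S] tup_Max[OF S] \<theta>_def ..
  have g2: "ok (N + Suc r) (\<lambda>n x. \<Sum>S\<in>subs N ?m. c S * vk m' r u n (tup N ?m (Suc r) S x))"
    by (rule ok_sum[OF finite_subs]) (rule ok_scale[OF D])
  have g3: "ok (N + Suc r) (\<lambda>n x. \<Sum>S\<in>subs N ?m. c S * u n (tup N m' (Suc r) (S - {Max S}) x))"
  proof -
    have "ok (N + Suc r) (\<lambda>n x. Wm N ?m r c u n (\<lambda>i\<in>{..<N+r}. x (\<theta> i)) - (\<Sum>S\<in>subs N ?m. c S * vk m' r u n (tup N ?m (Suc r) S x)))"
      by (rule ok_diff[OF g1 g2])
    moreover have "Wm N ?m r c u n (\<lambda>i\<in>{..<N+r}. x (\<theta> i)) - (\<Sum>S\<in>subs N ?m. c S * vk m' r u n (tup N ?m (Suc r) S x))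
        = (\<Sum>S\<in>subs N ?m. c S * u n (tup N m' (Suc r) (S - {Max S}) x))" for n x
      unfolding Wm_def by (simp add: Deq sum_subtractf[symmetric] algebra_simps cong: sum.cong)
    ultimately show ?thesis by simp
  qed
  define c2 where "c2 S' = (\<Sum>S\<in>{S. S \<in> subs N ?m \<and> S - {Max S} = S'}. c S)" for S'
  have regroup: "(\<Sum>S\<in>subs N ?m. c S * u n (tup N m' (Suc r) (S - {Max S}) x)) = Wm N m' (Suc r) c2 u n x" for n x
  proof -
    have "Wm N m' (Suc r) c2 u n x = (\<Sum>S'\<in>subs N m'. \<Sum>S\<in>{S. S \<in> subs N ?m \<and> S - {Max S} = S'}. c S * u n (tup N m' (Suc r) (S - {Max S}) x))"
      unfolding Wm_def c2_def sum_distrib_right by (intro sum.cong refl) auto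
    also have "\<dots> = (\<Sum>S\<in>subs N ?m. c S * u n (tup N m' (Suc r) (S - {Max S}) x))"
      by (rule sum.group[OF finite_subs finite_subs]) (auto intro: subs_Max(1))
    finally show ?thesis by simp
  qed
  have g4: "ok (N + Suc r) (Wm N m' (Suc r) c2 u)"
    using g3 regroup by simp
  have c20: "\<forall>S. 0 \<le> c2 S" unfolding c2_def using c0 by (auto intro: sum_nonneg)
  have "0 < c2 (S0 - {Max S0})"
  proof -
    have "c S0 \<le> c2 (S0 - {Max S0})" unfolding c2_def
      by (rule member_le_sum) (use S0 c0 finite_subs in auto)
    then show ?thesis using S0 by simp
  qed
  then have "\<exists>S\<in>subs N m'. 0 < c2 S" using subs_Max(1)[OF S0(1)] by blast
  from IH[OF c20 this g4] show ?thesis by simp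
qed

end



definition zeta :: "nat \<Rightarrow> nat \<Rightarrow> nat \<Rightarrow> nat \<Rightarrow> nat" where "zeta p N r i = (if i = p then N + r else i)"
definition tau :: "nat \<Rightarrow> nat \<Rightarrow> nat \<Rightarrow> nat \<Rightarrow> nat" where
  "tau p N r i = (if i \<le> p then i else if i = Suc p then N + r else N + (i - Suc (Suc p)))"

lemma insert_facts:
  assumes S': "S' \<in> subs p m'"
  shows "sl (insert p S') = sl S' @ [p]" "length (sl S') = m'" "\<And>k. k < m' \<Longrightarrow> sl S' ! k < p"
proof -
  have fin: "finite S'" and sub: "S' \<subseteq> {..<p}" using subs_props[OF S'] by auto
  show "sl (insert p S') = sl S' @ [p]" using sl_insert_max[OF fin] sub by auto
  show "length (sl S') = m'" using subs_props[OF S'] by simp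
  show "\<And>k. k < m' \<Longrightarrow> sl S' ! k < p" using sl_nth_in(2)[OF S'] by simp
qed

lemma E12:
  assumes S': "S' \<in> subs p m'" and pN: "p < N"
  shows "tup N (Suc m') r (insert p S') (\<lambda>i\<in>{..<N+r}. x i)
       = (\<lambda>j\<in>{..<Suc m'+r}. tup p m' (Suc (Suc r)) S' (\<lambda>i\<in>{..<p + Suc (Suc r)}. x (tau p N r i)) (al (Suc m') j))"
    and "tup N (Suc m') r (insert p S') (\<lambda>i\<in>{..<N+r}. x (zeta p N r i))
       = (\<lambda>j\<in>{..<Suc m'+r}. tup p m' (Suc (Suc r)) S' (\<lambda>i\<in>{..<p + Suc (Suc r)}. x (tau p N r i)) (be m' j))"
proof -
  note F = insert_facts[OF S']
  have L: "tup N (Suc m') r (insert p S') (\<lambda>i\<in>{..<N+r}. x i) j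
       = (\<lambda>j\<in>{..<Suc m'+r}. tup p m' (Suc (Suc r)) S' (\<lambda>i\<in>{..<p + Suc (Suc r)}. x (tau p N r i)) (al (Suc m') j)) j
     \<and> tup N (Suc m') r (insert p S') (\<lambda>i\<in>{..<N+r}. x (zeta p N r i)) j
       = (\<lambda>j\<in>{..<Suc m'+r}. tup p m' (Suc (Suc r)) S' (\<lambda>i\<in>{..<p + Suc (Suc r)}. x (tau p N r i)) (be m' j)) j" for j
  proof -
    consider "j < m'" | "j = m'" | "Suc m' \<le> j" "j < Suc m' + r" | "\<not> j < Suc m' + r" by linarith
    then show ?thesis
    proof cases
      case 1
      have a: "ix N (Suc m') (insert p S') j = sl S' ! j" using 1 F by (simp add: ix_def nth_append)
      have b: "al (Suc m') j = j" "be m' j = j" using 1 by (auto simp: al_def be_def)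
      have c: "ix p m' S' j = sl S' ! j" using 1 by (simp add: ix_def)
      have lt: "sl S' ! j < p" using F(3)[OF 1] .
      have d: "tau p N r (sl S' ! j) = sl S' ! j" "zeta p N r (sl S' ! j) = sl S' ! j" using lt by (auto simp: tau_def zeta_def)
      have e: "sl S' ! j < N + r" "sl S' ! j < p + Suc (Suc r)" "j < m' + Suc (Suc r)" "j < Suc m' + r" using lt pN 1 by auto
      show ?thesis unfolding tup_def using a b c d e by simp
    next
      case 2
      have a: "ix N (Suc m') (insert p S') j = p" using 2 F by (simp add: ix_def nth_append)
      have b: "al (Suc m') j = m'" "be m' j = Suc m'" using 2 by (auto simp: al_def be_def)
      have c: "ix p m' S' m' = p" "ix p m' S' (Suc m') = Suc p" by (auto simp: ix_def)
      have d: "tau p N r p = p" "tau p N r (Suc p) = N + r" "zeta p N r p = N + r" by (auto simp: tau_def zeta_def)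
      have e: "p < N + r" "p < p + Suc (Suc r)" "Suc p < p + Suc (Suc r)" "m' < m' + Suc (Suc r)"
        "Suc m' < m' + Suc (Suc r)" "j < Suc m' + r" using pN 2 by auto
      show ?thesis unfolding tup_def using a b c d e 2 by simp
    next
      case 3
      have a: "ix N (Suc m') (insert p S') j = N + (j - Suc m')" using 3 by (simp add: ix_def)
      have b: "al (Suc m') j = Suc j" "be m' j = Suc j" using 3 by (auto simp: al_def be_def)
      have c: "ix p m' S' (Suc j) = p + (Suc j - m')" using 3 by (simp add: ix_def)
      have d: "tau p N r (p + (Suc j - m')) = N + (j - Suc m')" "zeta p N r (N + (j - Suc m')) = N + (j - Suc m')"
        using 3 pN by (auto simp: tau_def zeta_def)
      have e: "N + (j - Suc m') < N + r" "p + (Suc j - m') < p + Suc (Suc r)" "Suc j < m' + Suc (Suc r)"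
        using 3 by auto
      show ?thesis unfolding tup_def using a b c d e 3 by simp
    next
      case 4
      then show ?thesis unfolding tup_def by simp
    qed
  qed
  show "tup N (Suc m') r (insert p S') (\<lambda>i\<in>{..<N+r}. x i)
       = (\<lambda>j\<in>{..<Suc m'+r}. tup p m' (Suc (Suc r)) S' (\<lambda>i\<in>{..<p + Suc (Suc r)}. x (tau p N r i)) (al (Suc m') j))"
    using L by blast
  show "tup N (Suc m') r (insert p S') (\<lambda>i\<in>{..<N+r}. x (zeta p N r i))
       = (\<lambda>j\<in>{..<Suc m'+r}. tup p m' (Suc (Suc r)) S' (\<lambda>i\<in>{..<p + Suc (Suc r)}. x (tau p N r i)) (be m' j))"
    using L by blast
qed




context gm begin

lemma part1:
  assumes IH: "\<And>N r c u. (\<forall>S. 0 \<le> c S) \<Longrightarrow> (\<exists>S\<in>subs N m'. 0 < c S) \<Longrightarrow> ok (N+r) (Wm N m' r c u) \<Longrightarrow> ok (m'+r) u"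
    and c0: "\<forall>S. 0 \<le> c S" and S0: "S0 \<in> subs N (Suc m')" "0 < c S0"
    and hW: "ok (N+r) (Wm N (Suc m') r c u)"
  shows "ok (Suc m' + Suc r) (vk m' r u)"
proof -
  let ?m = "Suc m'"
  define A where "A = {S \<in> subs N ?m. 0 < c S}"
  have finA: "finite A" using finite_subs A_def by auto
  have neA: "A \<noteq> {}" using S0 A_def by auto
  define p where "p = Max (Max ` A)"
  have "p \<in> Max ` A" unfolding p_def using finA neA by (intro Max_in) auto
  then obtain S1 where S1: "S1 \<in> A" "Max S1 = p" by auto
  have hmax: "Max S \<le> p" if "S \<in> subs N ?m" "0 < c S" for S
    unfolding p_def using that finA A_def by (intro Max_ge) auto
  have pN: "p < N"
  proof -
    have "S1 \<in> subs N ?m" using S1 A_def by auto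
    then show ?thesis using subs_Max(3)[of S1 N m'] S1(2) subs_props(6)[of S1 N ?m] by auto
  qed
  define F where "F n x = Wm N ?m r c u n (\<lambda>i\<in>{..<N+r}. x i) - Wm N ?m r c u n (\<lambda>i\<in>{..<N+r}. x (zeta p N r i))" for n x
  have h1: "ok (N + Suc r) F"
    unfolding F_def
  proof (rule ok_diff)
    show "ok (N + Suc r) (\<lambda>n x. Wm N ?m r c u n (\<lambda>i\<in>{..<N+r}. x i))"
      by (rule ok_reindex[where \<sigma>="\<lambda>i. i", THEN iffD2, OF _ _ hW]) auto
    show "ok (N + Suc r) (\<lambda>n x. Wm N ?m r c u n (\<lambda>i\<in>{..<N+r}. x (zeta p N r i)))"
      by (rule ok_reindex[THEN iffD2, OF _ _ hW]) (use pN in \<open>auto simp: zeta_def inj_on_def\<close>)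
  qed
  define c1 where "c1 S' = c (insert p S')" for S'
  define y where "y x = (\<lambda>i\<in>{..<p + Suc (Suc r)}. x (tau p N r i))" for x :: "nat \<Rightarrow> 'a"
  have key: "F n x = Wm p m' (Suc (Suc r)) c1 (vk m' r u) n (y x)" for n x
  proof -
    define f where "f S = c S * (u n (tup N ?m r S (\<lambda>i\<in>{..<N+r}. x i)) - u n (tup N ?m r S (\<lambda>i\<in>{..<N+r}. x (zeta p N r i))))" for S
    have F1: "F n x = (\<Sum>S\<in>subs N ?m. f S)"
      unfolding F_def Wm_def f_def by (simp add: sum_subtractf[symmetric] right_diff_distrib)
    define B where "B = insert p ` subs p m'"
    have Bsub: "B \<subseteq> subs N ?m"
    proof
      fix S assume "S \<in> B"
      then obtain S' where S': "S' \<in> subs p m'" "S = insert p S'" using B_def by auto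
      have "finite S'" "S' \<subseteq> {..<p}" "card S' = m'" using subs_props[OF S'(1)] by auto
      moreover have "p \<notin> S'" using \<open>S' \<subseteq> {..<p}\<close> by auto
      ultimately have "card (insert p S') = Suc m'" by (simp add: card_insert_disjoint)
      then show "S \<in> subs N ?m" using S' pN \<open>S' \<subseteq> {..<p}\<close> by (auto simp: subs_def)
    qed
    have zero: "f S = 0" if S: "S \<in> subs N ?m - B" for S
    proof (cases "p \<in> S")
      case False
      have "tup N ?m r S (\<lambda>i\<in>{..<N+r}. x (zeta p N r i)) = tup N ?m r S (\<lambda>i\<in>{..<N+r}. x i)"
        unfolding tup_def
      proof (rule restrict_ext)
        fix j assume j: "j \<in> {..<?m + r}"
        have "ix N ?m S j \<noteq> p"
        proof (cases "j < ?m")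
          case True then show ?thesis using sl_nth_in(1)[of S N ?m j] S False by (auto simp: ix_def)
        next
          case False then show ?thesis using pN by (auto simp: ix_def)
        qed
        moreover have "ix N ?m S j < N + r" using ix_inj(2)[of S N ?m r] S j by auto
        ultimately show "(\<lambda>i\<in>{..<N+r}. x (zeta p N r i)) (ix N ?m S j) = (\<lambda>i\<in>{..<N+r}. x i) (ix N ?m S j)"
          by (simp add: zeta_def)
      qed
      then show ?thesis unfolding f_def by simp
    next
      case True
      show ?thesis
      proof (rule ccontr)
        assume "f S \<noteq> 0"
        then have "c S \<noteq> 0" unfolding f_def by auto
        then have cS: "0 < c S" using c0 by (metis less_eq_real_def)
        have SN: "S \<in> subs N ?m" using S by auto
        have fin: "finite S" using subs_props(1)[OF SN] .
        have le: "s \<le> p" if "s \<in> S" for s using hmax[OF SN cS] Max_ge[OF fin that] by simp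
        have sub: "S - {p} \<subseteq> {..<p}" using le by (force simp: le_less)
        have "S - {p} \<in> subs p m'"
          using SN True fin sub by (auto simp: subs_def card_Diff_singleton)
        moreover have "S = insert p (S - {p})" using True by auto
        ultimately have "S \<in> B" unfolding B_def by blast
        then show False using S by auto
      qed
    qed
    have "(\<Sum>S\<in>subs N ?m. f S) = (\<Sum>S\<in>B. f S)"
      by (rule sum.mono_neutral_right[OF finite_subs Bsub]) (use zero in auto)
    also have "\<dots> = (\<Sum>S'\<in>subs p m'. f (insert p S'))"
      unfolding B_def
    proof (rule sum.reindex[unfolded comp_def])
      show "inj_on (insert p) (subs p m')"
      proof (rule inj_onI)
        fix X Y assume "X \<in> subs p m'" "Y \<in> subs p m'" "insert p X = insert p Y"
        then show "X = Y" by (auto simp: subs_def)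
      qed
    qed
    also have "\<dots> = Wm p m' (Suc (Suc r)) c1 (vk m' r u) n (y x)"
      unfolding Wm_def
    proof (rule sum.cong[OF refl])
      fix S' assume S': "S' \<in> subs p m'"
      show "f (insert p S') = c1 S' * vk m' r u n (tup p m' (Suc (Suc r)) S' (y x))"
        unfolding f_def c1_def vk_def y_def E12(1)[OF S' pN, where x=x] E12(2)[OF S' pN, where x=x] ..
    qed
    finally show ?thesis using F1 by simp
  qed
  have h2: "ok (p + Suc (Suc r)) (Wm p m' (Suc (Suc r)) c1 (vk m' r u))"
  proof -
    have "ok (N + Suc r) (\<lambda>n x. Wm p m' (Suc (Suc r)) c1 (vk m' r u) n (\<lambda>i\<in>{..<p + Suc (Suc r)}. x (tau p N r i)))"
    proof -
      have "F = (\<lambda>n x. Wm p m' (Suc (Suc r)) c1 (vk m' r u) n (y x))" by (intro ext) (rule key)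
      then show ?thesis using h1 unfolding y_def by simp
    qed
    moreover have "inj_on (tau p N r) {..<p + Suc (Suc r)}"
      using pN by (auto simp: inj_on_def tau_def split: if_splits)
    moreover have "tau p N r ` {..<p + Suc (Suc r)} \<subseteq> {..<N + Suc r}"
      using pN by (auto simp: tau_def)
    ultimately show ?thesis using ok_reindex by blast
  qed
  have c10: "\<forall>S. 0 \<le> c1 S" using c0 c1_def by auto
  have "S1 - {p} \<in> subs p m' \<and> 0 < c1 (S1 - {p})"
  proof -
    have SN: "S1 \<in> subs N ?m" "0 < c S1" using S1 A_def by auto
    have fin: "finite S1" using subs_props(1)[OF SN(1)] .
    have pin: "p \<in> S1" using subs_Max(3)[OF SN(1)] S1(2) by simp
    have le: "s \<le> p" if "s \<in> S1" for s using Max_ge[OF fin that] S1(2) by simp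
    have sub: "S1 - {p} \<subseteq> {..<p}" using le by (force simp: le_less)
    have "S1 - {p} \<in> subs p m'"
      using SN pin fin sub by (auto simp: subs_def card_Diff_singleton)
    moreover have "insert p (S1 - {p}) = S1" using pin by auto
    ultimately show ?thesis using SN c1_def by auto
  qed
  then have "\<exists>S\<in>subs p m'. 0 < c1 S" by blast
  from IH[OF c10 this h2] show ?thesis by simp
qed

end



context gm begin

lemma base:
  assumes c0: "\<forall>S. 0 \<le> c S" and ex: "\<exists>S\<in>subs N 0. 0 < c S" and hW: "ok (N+r) (Wm N 0 r c u)"
  shows "ok (0+r) u"
proof -
  have s0: "subs N 0 = {{}}"
  proof (rule set_eqI)
    fix S show "S \<in> subs N 0 \<longleftrightarrow> S \<in> {{}}"
    proof
      assume "S \<in> subs N 0"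
      then have "finite S" "card S = 0" using subs_props[of S N 0] by auto
      then show "S \<in> {{}}" by simp
    next
      assume "S \<in> {{}}" then show "S \<in> subs N 0" by (simp add: subs_def)
    qed
  qed
  have cpos: "0 < c {}" using ex s0 by auto
  have W: "Wm N 0 r c u n x = c {} * u n (\<lambda>j\<in>{..<r}. x (N + j))" for n x
    unfolding Wm_def s0 by (simp add: tup_def ix_def)
  have "ok (N+r) (\<lambda>n x. (1 / c {}) * Wm N 0 r c u n x)" by (rule ok_scale[OF hW])
  moreover have "(\<lambda>n x. (1 / c {}) * Wm N 0 r c u n x) = (\<lambda>n x. u n (\<lambda>j\<in>{..<r}. x (N + j)))"
    using cpos by (simp add: W)
  ultimately have "ok (N+r) (\<lambda>n x. u n (\<lambda>j\<in>{..<r}. x (N + j)))" by simp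
  then show ?thesis by (subst (asm) ok_reindex) (auto simp: inj_on_def)
qed

lemma main:
  "\<forall>N r c u. (\<forall>S. 0 \<le> c S) \<longrightarrow> (\<exists>S\<in>subs N m. 0 < c S) \<longrightarrow> ok (N+r) (Wm N m r c u) \<longrightarrow> ok (m+r) u"
proof (induction m)
  case 0
  then show ?case using base by blast
next
  case (Suc m')
  have IH: "\<And>N r c u. (\<forall>S. 0 \<le> c S) \<Longrightarrow> (\<exists>S\<in>subs N m'. 0 < c S) \<Longrightarrow> ok (N+r) (Wm N m' r c u) \<Longrightarrow> ok (m'+r) u"
    using Suc.IH by blast
  show ?case
  proof (intro allI impI)
    fix N r c u assume c0: "\<forall>S. 0 \<le> (c :: nat set \<Rightarrow> real) S" and ex: "\<exists>S\<in>subs N (Suc m'). 0 < c S"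
      and hW: "ok (N+r) (Wm N (Suc m') r c u)"
    from ex obtain S0 where S0: "S0 \<in> subs N (Suc m')" "0 < c S0" by blast
    have "ok (Suc m' + Suc r) (vk m' r u)" by (rule part1[OF IH c0 S0 hW])
    then show "ok (Suc m' + r) u" using part2[OF IH c0 S0 hW] by simp
  qed
qed

end

theorem theorem1:
  fixes M :: "'a measure" and N m :: nat and u :: "nat \<Rightarrow> (nat \<Rightarrow> 'a) \<Rightarrow> real"
  assumes "complete_measure M" and "sigma_finite_measure M"
    and "emeasure M (space M) \<noteq> 0"
    and "1 \<le> m" and "m \<le> N"
  shows "(\<exists>U :: (nat \<Rightarrow> 'a) \<Rightarrow> real.
            AE x in prod_compl N M. (\<lambda>n. gen_mean N m (u n) x) \<longlonglongrightarrow> U x)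
     \<longleftrightarrow> (\<exists>v :: (nat \<Rightarrow> 'a) \<Rightarrow> real.
            AE y in prod_compl m M. (\<lambda>n. u n y) \<longlonglongrightarrow> v y)"
proof -
  interpret gm M using assms(2,3) by (simp add: gm_def)
  define C where "C = real (N choose m)"
  have Cpos: "0 < C" using assms(5) by (simp add: C_def zero_less_binomial)
  have gm_eq: "gen_mean N m (u n) x = Wm N m 0 (\<lambda>_. 1 / C) u n x" for n x
  proof -
    have "sub_tuple S x = tup N m 0 S x" if "S \<in> subs N m" for S
      using that by (auto simp: sub_tuple_def tup_def ix_def subs_def sl_def fun_eq_iff)
    then show ?thesis unfolding gen_mean_def Wm_def C_def
      by (simp add: subs_def[symmetric] sum_divide_distrib cong: sum.cong)
  qed
  have conv_ex: "(\<exists>L::(nat \<Rightarrow> 'a) \<Rightarrow> real. AE x in Q. (\<lambda>n. f n x) \<longlonglongrightarrow> L x) \<longleftrightarrow> (AE x in Q. convergent (\<lambda>n. f n x))"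
    for Q and f :: "nat \<Rightarrow> (nat \<Rightarrow> 'a) \<Rightarrow> real"
  proof
    assume "\<exists>L. AE x in Q. (\<lambda>n. f n x) \<longlonglongrightarrow> L x"
    then obtain L where "AE x in Q. (\<lambda>n. f n x) \<longlonglongrightarrow> L x" by blast
    then show "AE x in Q. convergent (\<lambda>n. f n x)" by eventually_elim (auto simp: convergent_def)
  next
    assume "AE x in Q. convergent (\<lambda>n. f n x)"
    then have "AE x in Q. (\<lambda>n. f n x) \<longlonglongrightarrow> lim (\<lambda>n. f n x)"
      by eventually_elim (simp add: convergent_LIMSEQ_iff)
    then show "\<exists>L. AE x in Q. (\<lambda>n. f n x) \<longlonglongrightarrow> L x" by (intro exI[where x="\<lambda>x. lim (\<lambda>n. f n x)"])
  qed
  have lhs: "(\<exists>U. AE x in prod_compl N M. (\<lambda>n. gen_mean N m (u n) x) \<longlonglongrightarrow> U x) \<longleftrightarrow> ok N (Wm N m 0 (\<lambda>_. 1 / C) u)"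
    unfolding prod_compl_def AE_completion_iff conv_ex ok_def gm_eq ..
  have rhs: "(\<exists>v. AE y in prod_compl m M. (\<lambda>n. u n y) \<longlonglongrightarrow> v y) \<longleftrightarrow> ok m u"
    unfolding prod_compl_def AE_completion_iff conv_ex ok_def ..
  have ex: "\<exists>S\<in>subs N m. 0 < (\<lambda>_. 1 / C) S"
    using assms(5) Cpos by (intro bexI[of _ "{..<m}"]) (auto simp: subs_def)
  show ?thesis
    unfolding lhs rhs
  proof
    assume h: "ok N (Wm N m 0 (\<lambda>_. 1 / C) u)"
    have c0: "\<forall>S. 0 \<le> (\<lambda>_. 1 / C) (S::nat set)" using Cpos by simp
    have "ok (m + 0) u" using main[of m, rule_format, of "\<lambda>_. 1/C" N 0 u] ex h Cpos by simp
    then show "ok m u" by simp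
  next
    assume hu: "ok m u"
    have "ok N (\<lambda>n x. \<Sum>S\<in>subs N m. (1 / C) * u n (tup N m 0 S x))"
    proof (rule ok_sum[OF finite_subs], rule ok_scale)
      fix S assume S: "S \<in> subs N m"
      show "ok N (\<lambda>n x. u n (tup N m 0 S x))"
        using ok_reindex[OF ix_inj[OF S, of 0], of u] hu unfolding tup_def by simp
    qed
    then show "ok N (Wm N m 0 (\<lambda>_. 1 / C) u)" unfolding Wm_def by simp
  qed
qed



end
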